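(* Let $p\in\mathbb R^I$ be a probability vector with positive entries and suppose $\vartheta_p>0$. Then there exist nonnegative integers $\{\widetilde N^n_{ij}:(i,j)\in\mathcal E,\ n\in\mathbb N\}$ and a constant $C_0>0$ such that, for all sufficiently large $n$: (i) $\lambda^n_i=\sum_{j\in\mathcal J(i)}\mu^n_{ij}\widetilde N^n_{ij}-\vartheta_p\,p_i\sqrt n+\epsilon^n_i$ for all $i\in\mathcal I$, where $\epsilon^n_i/\sqrt n\to0$ as $n\to\infty$; (ii) $|N^n_{ij}-\widetilde N^n_{ij}|\le C_0\sqrt n$ for all $(i,j)\in\mathcal E$; (iii) $\sum_{i\in\mathcal I(j)}\widetilde N^n_{ij}=N^n_j$ for all $j\in\mathcal J$.
   Context: Network and parameters: $\mathcal I=\{1,\dots,I\}$, $\mathcal J=\{1,\dots,J\}$, edges $\mathcal E\subset\mathcal I\times\mathcal J$ with the bipartite graph $\mathcal G=(\mathcal I\cup\mathcal J,\mathcal E)$ a tree; $i\sim j$ iff $(i,j)\in\mathcal E$, $\mathcal J(i)=\{j:i\sim j\}$, $\mathcal I(j)=\{i:i\sim j\}$; $\mathbb R^{\mathcal G}$ denotes arrays in $\mathbb R^{I\times J}$ vanishing off $\mathcal E$, $\mathbb R^{\mathcal G}_+$ those with nonnegative entries. For each $n\in\mathbb N$: arrival rates $\lambda^n_i>0$, service rates $\mu^n_{ij}>0$, pool sizes $N^n_j\in\mathbb N$, with $\lambda^n_i/n\to\lambda_i>0$, $N^n_j/n\to\nu_j>0$, $\mu^n_{ij}\to\mu_{ij}>0$,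 $(\lambda^n_i-n\lambda_i)/\sqrt n\to\hat\lambda_i$, $\sqrt n(\mu^n_{ij}-\mu_{ij})\to\hat\mu_{ij}$, $\sqrt n(N^n_j/n-\nu_j)\to\hat\nu_j$ (real limits). Complete resource pooling: the LP "minimize $\max_j\sum_i\xi_{ij}$ over $\xi\in\mathbb R^{\mathcal G}_+$ subject to $\sum_j\mu_{ij}\nu_j\xi_{ij}=\lambda_i$ $\forall i$" has a unique solution $\xi^*$, with $\sum_i\xi^*_{ij}=1$ $\forall j$ and $\xi^*_{ij}>0$ for $i\sim j$; $z^*_{ij}:=\xi^*_{ij}\nu_j$; $\theta_j:=\hat\nu_j+\sum_{i\in\mathcal I(j)}(\hat\mu_{ij}/\mu_{ij})z^*_{ij}$. SWSS: for a probability vector $p$ with positive entries, $\vartheta_p$ is the (unique) optimal value of: maximize $\vartheta$ over $(\vartheta,\kappa)\in\mathbb R\times\mathbb R^{\mathcal G}$ subject to $\hat\lambda_i\le\sum_{j\in\mathcal J(i)}\mu_{ij}\kappa_{ij}-\vartheta p_i$ $\forall i$ and $\sum_{i\in\mathcal I(j)}\kappa_{ij}=\theta_j$ $\forall j$. $N^n_{ij}$ ($(i,j)\in\mathcal E$) are nonnegative integers with $\lfloor\xi^*_{ij}N^n_j\rfloor\le N^n_{ij}\le\lceil\xi^*_{ij}N^n_j\rceil$ and $\sum_{i\in\mathcal I(j)}N^n_{ij}=N^n_j$. *)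

theory Defs
  imports "HOL-Analysis.Analysis"
begin

text \<open>Classes are \<open>{1..I}\<close>, pools are \<open>{1..J}\<close>; the edge set \<open>E\<close> is a set of
  pairs \<open>(i,j)\<close>. Arrays in \<open>R^G\<close> are functions \<open>nat \<Rightarrow> nat \<Rightarrow> real\<close> vanishing off \<open>E\<close>.\<close>

definition Jset :: "(nat \<times> nat) set \<Rightarrow> nat \<Rightarrow> nat set" where
  "Jset E i = {j. (i, j) \<in> E}"

definition Iset :: "(nat \<times> nat) set \<Rightarrow> nat \<Rightarrow> nat set" where
  "Iset E j = {i. (i, j) \<in> E}"

definition bip_adj :: "(nat \<times> nat) set \<Rightarrow> ((nat + nat) \<times> (nat + nat)) set" where
  "bip_adj E = {(Inl i, Inr j) | i j. (i, j) \<in> E} \<union> {(Inr j, Inl i) | i j. (i, j) \<in> E}"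

text \<open>A tree: connected, and acyclic (every edge is a bridge, i.e. removing it
  disconnects its endpoints).\<close>
definition bip_tree :: "nat \<Rightarrow> nat \<Rightarrow> (nat \<times> nat) set \<Rightarrow> bool" where
  "bip_tree I J E \<longleftrightarrow>
     E \<subseteq> {1..I} \<times> {1..J} \<and>
     (\<forall>u \<in> Inl ` {1..I} \<union> Inr ` {1..J}. \<forall>v \<in> Inl ` {1..I} \<union> Inr ` {1..J}.
        (u, v) \<in> (bip_adj E)\<^sup>*) \<and>
     (\<forall>(i, j) \<in> E. (Inl i, Inr j) \<notin> (bip_adj (E - {(i, j)}))\<^sup>*)"

definition in_RG :: "(nat \<times> nat) set \<Rightarrow> (nat \<Rightarrow> nat \<Rightarrow> real) \<Rightarrow> bool" where
  "in_RG E x \<longleftrightarrow> (\<forall>i j. (i, j) \<notin> E \<longrightarrow> x i j = 0)"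

definition in_RG_plus :: "(nat \<times> nat) set \<Rightarrow> (nat \<Rightarrow> nat \<Rightarrow> real) \<Rightarrow> bool" where
  "in_RG_plus E x \<longleftrightarrow> in_RG E x \<and> (\<forall>i j. 0 \<le> x i j)"

definition crp_feasible ::
  "nat \<Rightarrow> (nat \<times> nat) set \<Rightarrow> (nat \<Rightarrow> real) \<Rightarrow> (nat \<Rightarrow> nat \<Rightarrow> real) \<Rightarrow> (nat \<Rightarrow> real)
   \<Rightarrow> (nat \<Rightarrow> nat \<Rightarrow> real) \<Rightarrow> bool" where
  "crp_feasible I E lam mu nu \<xi> \<longleftrightarrow> in_RG_plus E \<xi> \<and>
     (\<forall>i \<in> {1..I}. (\<Sum>j \<in> Jset E i. mu i j * nu j * \<xi> i j) = lam i)"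

definition crp_obj :: "nat \<Rightarrow> (nat \<times> nat) set \<Rightarrow> (nat \<Rightarrow> nat \<Rightarrow> real) \<Rightarrow> real" where
  "crp_obj J E \<xi> = Max ((\<lambda>j. \<Sum>i \<in> Iset E j. \<xi> i j) ` {1..J})"

definition crp_unique_solution ::
  "nat \<Rightarrow> nat \<Rightarrow> (nat \<times> nat) set \<Rightarrow> (nat \<Rightarrow> real) \<Rightarrow> (nat \<Rightarrow> nat \<Rightarrow> real) \<Rightarrow> (nat \<Rightarrow> real)
   \<Rightarrow> (nat \<Rightarrow> nat \<Rightarrow> real) \<Rightarrow> bool" where
  "crp_unique_solution I J E lam mu nu \<xi>s \<longleftrightarrow>
     crp_feasible I E lam mu nu \<xi>s \<and>
     (\<forall>\<xi>. crp_feasible I E lam mu nu \<xi> \<longrightarrow> crp_obj J E \<xi>s \<le> crp_obj J E \<xi>) \<and>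
     (\<forall>\<xi>. crp_feasible I E lam mu nu \<xi> \<and> crp_obj J E \<xi> \<le> crp_obj J E \<xi>s \<longrightarrow> \<xi> = \<xi>s)"

definition swss_feasible ::
  "nat \<Rightarrow> nat \<Rightarrow> (nat \<times> nat) set \<Rightarrow> (nat \<Rightarrow> real) \<Rightarrow> (nat \<Rightarrow> nat \<Rightarrow> real) \<Rightarrow> (nat \<Rightarrow> real)
   \<Rightarrow> (nat \<Rightarrow> real) \<Rightarrow> real \<Rightarrow> (nat \<Rightarrow> nat \<Rightarrow> real) \<Rightarrow> bool" where
  "swss_feasible I J E lamhat mu theta p \<theta> \<kappa> \<longleftrightarrow> in_RG E \<kappa> \<and>
     (\<forall>i \<in> {1..I}. lamhat i \<le> (\<Sum>j \<in> Jset E i. mu i j * \<kappa> i j) - \<theta> * p i) \<and>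
     (\<forall>j \<in> {1..J}. (\<Sum>i \<in> Iset E j. \<kappa> i j) = theta j)"

definition swss_value ::
  "nat \<Rightarrow> nat \<Rightarrow> (nat \<times> nat) set \<Rightarrow> (nat \<Rightarrow> real) \<Rightarrow> (nat \<Rightarrow> nat \<Rightarrow> real) \<Rightarrow> (nat \<Rightarrow> real)
   \<Rightarrow> (nat \<Rightarrow> real) \<Rightarrow> real \<Rightarrow> bool" where
  "swss_value I J E lamhat mu theta p v \<longleftrightarrow>
     (\<exists>\<kappa>. swss_feasible I J E lamhat mu theta p v \<kappa>) \<and>
     (\<forall>\<theta> \<kappa>. swss_feasible I J E lamhat mu theta p \<theta> \<kappa> \<longrightarrow> \<theta> \<le> v)"

end

theory Submission imports Defs begin
definition rowsum :: "(nat \<times> nat) set \<Rightarrow> (nat \<Rightarrow> nat \<Rightarrow> real) \<Rightarrow> (nat \<Rightarrow> nat \<Rightarrow> real) \<Rightarrow> nat \<Rightarrow> real" where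
  "rowsum E mu \<kappa> i = (\<Sum>j \<in> Jset E i. mu i j * \<kappa> i j)"

lemma path_cross:
  assumes "(u, v) \<in> r\<^sup>*" "Q u" "\<not> Q v"
  shows "\<exists>x y. (x, y) \<in> r \<and> Q x \<and> \<not> Q y"
  using assms
proof (induction rule: rtrancl_induct)
  case base then show ?case by simp
next
  case (step y z)
  then show ?case by (cases "Q y") auto
qed

lemma sum_two_upd:
  fixes f :: "nat \<Rightarrow> real"
  assumes "finite A" "a \<in> A" "b \<in> A" "a \<noteq> b"
  shows "(\<Sum>x\<in>A. f x - (if x = a then c else 0) + (if x = b then c else 0)) = sum f A"
  using assms by (simp add: sum.distrib sum_subtractf)

lemma tree_fin:
  assumes "bip_tree I J E"
  shows "finite E" "E \<subseteq> {1..I} \<times> {1..J}" "\<And>i. finite (Jset E i)" "\<And>j. finite (Iset E j)"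
proof -
  show E: "E \<subseteq> {1..I} \<times> {1..J}" using assms unfolding bip_tree_def by blast
  then show "finite E" using finite_subset by blast
  show "\<And>i. finite (Jset E i)"
  proof -
    fix i have "Jset E i \<subseteq> {1..J}" using E unfolding Jset_def by blast
    then show "finite (Jset E i)" using finite_subset by blast
  qed
  show "\<And>j. finite (Iset E j)"
  proof -
    fix j have "Iset E j \<subseteq> {1..I}" using E unfolding Iset_def by blast
    then show "finite (Iset E j)" using finite_subset by blast
  qed
qed

lemma swss_step:
  assumes tree: "bip_tree I J E" and mu_pos: "\<And>i j. (i,j)\<in>E \<Longrightarrow> mu i j > 0"
    and feas: "swss_feasible I J E lamhat mu theta p v \<kappa>"
    and a: "a \<in> {1..I}" "lamhat a < rowsum E mu \<kappa> a - v * p a"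
    and b: "b \<in> {1..I}" "lamhat b = rowsum E mu \<kappa> b - v * p b"
  shows "\<exists>\<kappa>'. swss_feasible I J E lamhat mu theta p v \<kappa>' \<and>
     (\<forall>i\<in>{1..I}. lamhat i < rowsum E mu \<kappa> i - v * p i \<longrightarrow> lamhat i < rowsum E mu \<kappa>' i - v * p i) \<and>
     (\<exists>i1\<in>{1..I}. lamhat i1 = rowsum E mu \<kappa> i1 - v * p i1 \<and> lamhat i1 < rowsum E mu \<kappa>' i1 - v * p i1)"
proof -
  note fin = tree_fin[OF tree]
  define S where "S = {i\<in>{1..I}. lamhat i < rowsum E mu \<kappa> i - v * p i}"
  define Q where "Q = (\<lambda>x::nat+nat. case x of Inl i \<Rightarrow> i \<in> S | Inr j \<Rightarrow> (\<exists>i\<in>S. (i,j)\<in>E))"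
  have conn: "(Inl a, Inl b) \<in> (bip_adj E)\<^sup>*" using tree a(1) b(1) unfolding bip_tree_def by blast
  have "Q (Inl a)" using a unfolding Q_def S_def by simp
  moreover have "\<not> Q (Inl b)" using b unfolding Q_def S_def by simp
  ultimately obtain x y where xy: "(x,y) \<in> bip_adj E" "Q x" "\<not> Q y"
    using path_cross[OF conn] by blast
  then obtain i0 i1 j where e0: "(i0,j) \<in> E" and e1: "(i1,j) \<in> E" and i0S: "i0 \<in> S" and i1S: "i1 \<notin> S"
    unfolding bip_adj_def Q_def by auto
  have i0I: "i0 \<in> {1..I}" and i1I: "i1 \<in> {1..I}" using e0 e1 fin(2) by auto
  have ne: "i0 \<noteq> i1" using i0S i1S by auto
  define sl where "sl = rowsum E mu \<kappa> i0 - v * p i0 - lamhat i0"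
  have slpos: "sl > 0" using i0S unfolding S_def sl_def by auto
  define \<delta> where "\<delta> = sl / (2 * mu i0 j)"
  have mu0: "mu i0 j > 0" and mu1: "mu i1 j > 0" using mu_pos e0 e1 by auto
  have dpos: "\<delta> > 0" unfolding \<delta>_def using slpos mu0 by simp
  have md1: "mu i1 j * \<delta> > 0" using mu1 dpos by simp
  have dsmall: "mu i0 j * \<delta> < sl" unfolding \<delta>_def using slpos mu0 by (simp add: field_simps)
  define \<kappa>' where "\<kappa>' = (\<lambda>i' j'. \<kappa> i' j' - (if i' = i0 \<and> j' = j then \<delta> else 0) + (if i' = i1 \<and> j' = j then \<delta> else 0))"
  have rs: "rowsum E mu \<kappa>' i = rowsum E mu \<kappa> i - (if i = i0 then mu i0 j * \<delta> else 0) + (if i = i1 then mu i1 j * \<delta> else 0)" for i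
  proof -
    have "rowsum E mu \<kappa>' i = (\<Sum>j'\<in>Jset E i. mu i j' * \<kappa> i j' - (if i = i0 \<and> j' = j then mu i j' * \<delta> else 0) + (if i = i1 \<and> j' = j then mu i j' * \<delta> else 0))"
      unfolding rowsum_def \<kappa>'_def by (intro sum.cong) (auto simp: algebra_simps)
    also have "\<dots> = rowsum E mu \<kappa> i - (\<Sum>j'\<in>Jset E i. (if i = i0 \<and> j' = j then mu i j' * \<delta> else 0)) + (\<Sum>j'\<in>Jset E i. (if i = i1 \<and> j' = j then mu i j' * \<delta> else 0))"
      unfolding rowsum_def by (simp add: sum.distrib sum_subtractf)
    also have "\<dots> = rowsum E mu \<kappa> i - (if i = i0 then mu i0 j * \<delta> else 0) + (if i = i1 then mu i1 j * \<delta> else 0)"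
      using e0 e1 fin(3)[of i] by (auto simp: Jset_def if_distrib cong: if_cong)
    finally show ?thesis .
  qed
  have feas': "swss_feasible I J E lamhat mu theta p v \<kappa>'"
    unfolding swss_feasible_def
  proof (intro conjI ballI)
    show "in_RG E \<kappa>'" using feas e0 e1 unfolding swss_feasible_def in_RG_def \<kappa>'_def by auto
  next
    fix i assume i: "i \<in> {1..I}"
    have f: "lamhat i \<le> rowsum E mu \<kappa> i - v * p i" using feas i unfolding swss_feasible_def rowsum_def by auto
    show "lamhat i \<le> (\<Sum>j\<in>Jset E i. mu i j * \<kappa>' i j) - v * p i"
      using f rs[of i] dsmall ne dpos md1 unfolding sl_def rowsum_def[symmetric]
      by (auto split: if_splits)
  next
    fix j' assume j': "j' \<in> {1..J}"
    have "(\<Sum>i\<in>Iset E j'. \<kappa>' i j') = (\<Sum>i\<in>Iset E j'. \<kappa> i j')"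
    proof (cases "j' = j")
      case True
      have "(\<Sum>i\<in>Iset E j'. \<kappa>' i j') = (\<Sum>i\<in>Iset E j'. \<kappa> i j' - (if i = i0 then \<delta> else 0) + (if i = i1 then \<delta> else 0))"
        unfolding \<kappa>'_def using True by (intro sum.cong) auto
      also have "\<dots> = (\<Sum>i\<in>Iset E j'. \<kappa> i j')"
        by (rule sum_two_upd) (use fin(4) e0 e1 ne True in \<open>auto simp: Iset_def\<close>)
      finally show ?thesis .
    next
      case False then show ?thesis unfolding \<kappa>'_def by simp
    qed
    then show "(\<Sum>i\<in>Iset E j'. \<kappa>' i j') = theta j'" using feas j' unfolding swss_feasible_def by auto
  qed
  show ?thesis
  proof (intro exI conjI ballI impI)
    show "swss_feasible I J E lamhat mu theta p v \<kappa>'" by (fact feas')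
  next
    fix i assume "i \<in> {1..I}" "lamhat i < rowsum E mu \<kappa> i - v * p i"
    then show "lamhat i < rowsum E mu \<kappa>' i - v * p i"
      using rs[of i] dsmall ne dpos md1 unfolding sl_def by (auto split: if_splits)
  next
    have f: "lamhat i1 \<le> rowsum E mu \<kappa> i1 - v * p i1" using feas i1I unfolding swss_feasible_def rowsum_def by auto
    show "\<exists>i1\<in>{1..I}. lamhat i1 = rowsum E mu \<kappa> i1 - v * p i1 \<and> lamhat i1 < rowsum E mu \<kappa>' i1 - v * p i1"
      using i1I i1S f rs[of i1] ne dpos md1 unfolding S_def by (intro bexI[of _ i1]) (auto split: if_splits)
  qed
qed

lemma swss_all_slack:
  assumes tree: "bip_tree I J E" and mu_pos: "\<And>i j. (i,j)\<in>E \<Longrightarrow> mu i j > 0"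
  shows "card {i\<in>{1..I}. \<not> lamhat i < rowsum E mu \<kappa> i - v * p i} = n \<Longrightarrow>
    swss_feasible I J E lamhat mu theta p v \<kappa> \<Longrightarrow>
    a \<in> {1..I} \<Longrightarrow> lamhat a < rowsum E mu \<kappa> a - v * p a \<Longrightarrow>
    \<exists>\<kappa>'. swss_feasible I J E lamhat mu theta p v \<kappa>' \<and> (\<forall>i\<in>{1..I}. lamhat i < rowsum E mu \<kappa>' i - v * p i)"
proof (induction n arbitrary: \<kappa> rule: less_induct)
  case (less n)
  define T where "T = (\<lambda>\<kappa>. {i\<in>{1..I}. \<not> lamhat i < rowsum E mu \<kappa> i - v * p i})"
  show ?case
  proof (cases "T \<kappa> = {}")
    case True then show ?thesis using less.prems unfolding T_def by blast
  next
    case False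
    then obtain b where b: "b \<in> T \<kappa>" by blast
    have bI: "b \<in> {1..I}" using b unfolding T_def by auto
    have "lamhat b \<le> rowsum E mu \<kappa> b - v * p b"
      using less.prems(2) bI unfolding swss_feasible_def rowsum_def by auto
    then have beq: "lamhat b = rowsum E mu \<kappa> b - v * p b" using b unfolding T_def by auto
    obtain \<kappa>' where f': "swss_feasible I J E lamhat mu theta p v \<kappa>'"
      and pres: "\<forall>i\<in>{1..I}. lamhat i < rowsum E mu \<kappa> i - v * p i \<longrightarrow> lamhat i < rowsum E mu \<kappa>' i - v * p i"
      and new: "\<exists>i1\<in>{1..I}. lamhat i1 = rowsum E mu \<kappa> i1 - v * p i1 \<and> lamhat i1 < rowsum E mu \<kappa>' i1 - v * p i1"
      using swss_step[OF tree mu_pos less.prems(2) less.prems(3) less.prems(4) bI beq] by blast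
    have sub: "T \<kappa>' \<subset> T \<kappa>" using pres new unfolding T_def by auto
    have "card (T \<kappa>') < card (T \<kappa>)" by (rule psubset_card_mono) (use sub in \<open>auto simp: T_def\<close>)
    then have "card (T \<kappa>') < n" using less.prems(1) unfolding T_def by simp
    from less.IH[OF this _ f' less.prems(3)] pres less.prems(3,4) show ?thesis unfolding T_def by blast
  qed
qed

lemma swss_tight:
  assumes tree: "bip_tree I J E" and mu_pos: "\<And>i j. (i,j)\<in>E \<Longrightarrow> mu i j > 0"
    and p_pos: "\<And>i. i \<in> {1..I} \<Longrightarrow> p i > 0"
    and val: "swss_value I J E lamhat mu theta p v"
    and feas: "swss_feasible I J E lamhat mu theta p v \<kappa>"
    and i: "i \<in> {1..I}"
  shows "lamhat i = (\<Sum>j\<in>Jset E i. mu i j * \<kappa> i j) - v * p i"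
proof (rule ccontr)
  assume ne: "\<not> ?thesis"
  have "lamhat i \<le> rowsum E mu \<kappa> i - v * p i" using feas i unfolding swss_feasible_def rowsum_def by auto
  with ne have lt: "lamhat i < rowsum E mu \<kappa> i - v * p i" unfolding rowsum_def by auto
  obtain \<kappa>' where f': "swss_feasible I J E lamhat mu theta p v \<kappa>'"
    and all: "\<forall>i\<in>{1..I}. lamhat i < rowsum E mu \<kappa>' i - v * p i"
    using swss_all_slack[OF tree mu_pos refl feas i lt] by blast
  define D where "D = (\<lambda>i. (rowsum E mu \<kappa>' i - v * p i - lamhat i) / p i) ` {1..I}"
  have Dfin: "finite D" "D \<noteq> {}" unfolding D_def using i by auto
  define \<delta> where "\<delta> = Min D"
  have "\<forall>x\<in>D. x > 0" unfolding D_def using all p_pos by auto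
  then have dpos: "\<delta> > 0" unfolding \<delta>_def using Dfin by simp
  have "swss_feasible I J E lamhat mu theta p (v + \<delta>) \<kappa>'"
    unfolding swss_feasible_def
  proof (intro conjI ballI)
    show "in_RG E \<kappa>'" using f' unfolding swss_feasible_def by simp
  next
    fix j assume "j \<in> {1..J}" then show "(\<Sum>i\<in>Iset E j. \<kappa>' i j) = theta j" using f' unfolding swss_feasible_def by simp
  next
    fix k assume k: "k \<in> {1..I}"
    have "\<delta> \<le> (rowsum E mu \<kappa>' k - v * p k - lamhat k) / p k"
      unfolding \<delta>_def using Dfin k unfolding D_def by simp
    then have "\<delta> * p k \<le> rowsum E mu \<kappa>' k - v * p k - lamhat k" using p_pos[OF k] by (simp add: field_simps)
    then show "lamhat k \<le> (\<Sum>j\<in>Jset E k. mu k j * \<kappa>' k j) - (v + \<delta>) * p k"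
      unfolding rowsum_def by (simp add: algebra_simps)
  qed
  then have "v + \<delta> \<le> v" using val unfolding swss_value_def by blast
  then show False using dpos by simp
qed

lemma inv_sqrt_lim: "(\<lambda>n. 1 / sqrt (real n)) \<longlonglongrightarrow> 0"
proof -
  have "(\<lambda>n. sqrt (inverse (real n))) \<longlonglongrightarrow> sqrt 0"
    by (intro tendsto_real_sqrt lim_inverse_n)
  then show ?thesis by (simp add: real_sqrt_inverse divide_inverse)
qed

lemma edge_lim:
  fixes mun N Nt e :: "nat \<Rightarrow> real"
  assumes X: "(\<lambda>n. sqrt (real n) * (mun n - mu)) \<longlonglongrightarrow> mh"
    and Y: "(\<lambda>n. sqrt (real n) * (N n / real n - nu)) \<longlonglongrightarrow> nh"
    and eb: "\<And>n. \<bar>e n\<bar> \<le> K"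
    and Nt: "\<forall>\<^sub>F n in sequentially. Nt n = \<xi> * N n + sqrt (real n) * d + e n"
  shows "(\<lambda>n. mun n * Nt n / sqrt (real n) - sqrt (real n) * (mu * \<xi> * nu)) \<longlonglongrightarrow> mu * \<xi> * nh + mu * d + mh * \<xi> * nu"
proof -
  define s where "s = (\<lambda>n. sqrt (real n))"
  define Xn where "Xn = (\<lambda>n. s n * (mun n - mu))"
  define Yn where "Yn = (\<lambda>n. s n * (N n / real n - nu))"
  have is0: "(\<lambda>n. 1 / s n) \<longlonglongrightarrow> 0" unfolding s_def by (rule inv_sqrt_lim)
  have K: "K \<ge> 0" using eb[of 0] by simp
  have es: "(\<lambda>n. e n / s n) \<longlonglongrightarrow> 0"
  proof (rule Lim_null_comparison)
    show "\<forall>\<^sub>F n in sequentially. norm (e n / s n) \<le> K * (1 / s n)"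
      using eb by (intro always_eventually allI) (simp add: s_def abs_div divide_right_mono)
    show "(\<lambda>n. K * (1 / s n)) \<longlonglongrightarrow> 0" using tendsto_mult[OF tendsto_const is0, of K] by simp
  qed
  have XL: "Xn \<longlonglongrightarrow> mh" using X unfolding Xn_def s_def .
  have YL: "Yn \<longlonglongrightarrow> nh" using Y unfolding Yn_def s_def .
  define F where "F = (\<lambda>n. mu * \<xi> * Yn n + mu * d + mu * (e n / s n) + Xn n * \<xi> * nu
      + Xn n * (1 / s n) * (\<xi> * Yn n + d + e n / s n))"
  have "F \<longlonglongrightarrow> mu * \<xi> * nh + mu * d + mu * 0 + mh * \<xi> * nu + mh * 0 * (\<xi> * nh + d + 0)"
    unfolding F_def by (intro tendsto_intros XL YL es is0)
  then have FL: "F \<longlonglongrightarrow> mu * \<xi> * nh + mu * d + mh * \<xi> * nu" by simp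
  have ev: "\<forall>\<^sub>F n in sequentially. F n = mun n * Nt n / sqrt (real n) - sqrt (real n) * (mu * \<xi> * nu)"
    using Nt eventually_ge_at_top[of 1]
  proof eventually_elim
    case (elim n)
    have sp: "s n > 0" using elim(2) unfolding s_def by simp
    have ss: "s n * s n = real n" unfolding s_def by simp
    have m: "mun n = mu + Xn n / s n" unfolding Xn_def using sp by simp
    have "N n / real n - nu = Yn n / s n" unfolding Yn_def using sp by simp
    then have "N n = real n * (nu + Yn n / s n)" using elim(2) by (simp add: field_simps)
    then have "N n = s n * s n * (nu + Yn n / s n)" using ss by simp
    moreover have "s n * s n * (Yn n / s n) = s n * Yn n" using sp by simp
    ultimately have Nn: "N n = s n * s n * nu + s n * Yn n" by (simp add: distrib_left)
    have sq: "sqrt (real n) = s n" unfolding s_def ..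
    show ?case unfolding F_def elim(1) m Nn sq using sp
      by (simp add: field_simps)
  qed
  show ?thesis by (rule Lim_transform_eventually[OF FL ev])
qed

theorem lemma5:
  fixes I J :: nat and E :: "(nat \<times> nat) set"
    and lamn :: "nat \<Rightarrow> nat \<Rightarrow> real"      \<comment> \<open>\<open>lamn n i = \<lambda>^n_i\<close>\<close>
    and mun :: "nat \<Rightarrow> nat \<Rightarrow> nat \<Rightarrow> real"  \<comment> \<open>\<open>mun n i j = \<mu>^n_ij\<close>\<close>
    and Nn :: "nat \<Rightarrow> nat \<Rightarrow> nat"          \<comment> \<open>\<open>Nn n j = N^n_j\<close>\<close>
    and Nnij :: "nat \<Rightarrow> nat \<Rightarrow> nat \<Rightarrow> nat"   \<comment> \<open>\<open>Nnij n i j = N^n_ij\<close>\<close>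
    and lam nu lamhat nuhat :: "nat \<Rightarrow> real"
    and mu muhat :: "nat \<Rightarrow> nat \<Rightarrow> real"
    and \<xi>s :: "nat \<Rightarrow> nat \<Rightarrow> real"
    and p :: "nat \<Rightarrow> real" and vp :: real
  assumes tree: "bip_tree I J E"
    and lamn_pos: "\<And>n i. i \<in> {1..I} \<Longrightarrow> lamn n i > 0"
    and mun_pos: "\<And>n i j. (i, j) \<in> E \<Longrightarrow> mun n i j > 0"
    and lam_pos: "\<And>i. i \<in> {1..I} \<Longrightarrow> lam i > 0"
    and nu_pos: "\<And>j. j \<in> {1..J} \<Longrightarrow> nu j > 0"
    and mu_pos: "\<And>i j. (i, j) \<in> E \<Longrightarrow> mu i j > 0"
    and lim_lam: "\<And>i. i \<in> {1..I} \<Longrightarrow> (\<lambda>n. lamn n i / real n) \<longlonglongrightarrow> lam i"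
    and lim_N: "\<And>j. j \<in> {1..J} \<Longrightarrow> (\<lambda>n. real (Nn n j) / real n) \<longlonglongrightarrow> nu j"
    and lim_mu: "\<And>i j. (i, j) \<in> E \<Longrightarrow> (\<lambda>n. mun n i j) \<longlonglongrightarrow> mu i j"
    and lim_lamhat: "\<And>i. i \<in> {1..I} \<Longrightarrow>
        (\<lambda>n. (lamn n i - real n * lam i) / sqrt (real n)) \<longlonglongrightarrow> lamhat i"
    and lim_muhat: "\<And>i j. (i, j) \<in> E \<Longrightarrow>
        (\<lambda>n. sqrt (real n) * (mun n i j - mu i j)) \<longlonglongrightarrow> muhat i j"
    and lim_nuhat: "\<And>j. j \<in> {1..J} \<Longrightarrow>
        (\<lambda>n. sqrt (real n) * (real (Nn n j) / real n - nu j)) \<longlonglongrightarrow> nuhat j"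
    and crp: "crp_unique_solution I J E lam mu nu \<xi>s"
    and crp_sum: "\<And>j. j \<in> {1..J} \<Longrightarrow> (\<Sum>i \<in> Iset E j. \<xi>s i j) = 1"
    and crp_pos: "\<And>i j. (i, j) \<in> E \<Longrightarrow> \<xi>s i j > 0"
    and Nij_lb: "\<And>n i j. (i, j) \<in> E \<Longrightarrow> \<lfloor>\<xi>s i j * real (Nn n j)\<rfloor> \<le> int (Nnij n i j)"
    and Nij_ub: "\<And>n i j. (i, j) \<in> E \<Longrightarrow> int (Nnij n i j) \<le> \<lceil>\<xi>s i j * real (Nn n j)\<rceil>"
    and Nij_sum: "\<And>n j. j \<in> {1..J} \<Longrightarrow> (\<Sum>i \<in> Iset E j. Nnij n i j) = Nn n j"
    and p_pos: "\<And>i. i \<in> {1..I} \<Longrightarrow> p i > 0"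
    and p_sum: "(\<Sum>i \<in> {1..I}. p i) = 1"
    and vp_def: "swss_value I J E lamhat mu
        (\<lambda>j. nuhat j + (\<Sum>i \<in> Iset E j. (muhat i j / mu i j) * (\<xi>s i j * nu j))) p vp"
    and vp_pos: "vp > 0"
  shows "\<exists>Nt :: nat \<Rightarrow> nat \<Rightarrow> nat \<Rightarrow> nat. \<exists>C0 > 0. \<exists>\<epsilon> :: nat \<Rightarrow> nat \<Rightarrow> real.
    (\<forall>i \<in> {1..I}. (\<lambda>n. \<epsilon> n i / sqrt (real n)) \<longlonglongrightarrow> 0) \<and>
    (\<forall>\<^sub>F n in sequentially.
       (\<forall>i \<in> {1..I}. lamn n i =
          (\<Sum>j \<in> Jset E i. mun n i j * real (Nt n i j)) - vp * p i * sqrt (real n) + \<epsilon> n i) \<and>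
       (\<forall>(i, j) \<in> E. \<bar>real (Nnij n i j) - real (Nt n i j)\<bar> \<le> C0 * sqrt (real n)) \<and>
       (\<forall>j \<in> {1..J}. (\<Sum>i \<in> Iset E j. Nt n i j) = Nn n j))"
proof -
  note fin = tree_fin[OF tree]
  define s where "s = (\<lambda>n::nat. sqrt (real n))"
  define \<theta> where "\<theta> = (\<lambda>j. nuhat j + (\<Sum>i \<in> Iset E j. (muhat i j / mu i j) * (\<xi>s i j * nu j)))"
  have vpv: "swss_value I J E lamhat mu \<theta> p vp" using vp_def unfolding \<theta>_def .
  obtain \<kappa> where feas: "swss_feasible I J E lamhat mu \<theta> p vp \<kappa>" using vpv unfolding swss_value_def by blast
  have tight: "\<And>i. i\<in>{1..I} \<Longrightarrow> lamhat i = (\<Sum>j\<in>Jset E i. mu i j * \<kappa> i j) - vp * p i"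
    using swss_tight[OF tree mu_pos p_pos vpv feas] by blast
  define d where "d = (\<lambda>i j. \<kappa> i j - (\<xi>s i j * nuhat j + (muhat i j / mu i j) * (\<xi>s i j * nu j)))"
  have dcol: "(\<Sum>i\<in>Iset E j. d i j) = 0" if j: "j\<in>{1..J}" for j
  proof -
    have "(\<Sum>i\<in>Iset E j. d i j) = (\<Sum>i\<in>Iset E j. \<kappa> i j) - ((\<Sum>i\<in>Iset E j. \<xi>s i j) * nuhat j + (\<Sum>i\<in>Iset E j. (muhat i j / mu i j) * (\<xi>s i j * nu j)))"
      unfolding d_def by (simp add: sum_subtractf sum.distrib sum_distrib_right)
    also have "\<dots> = 0" using feas j crp_sum[OF j] unfolding swss_feasible_def \<theta>_def by simp
    finally show ?thesis .
  qed
  have Esub: "i \<in> {1..I} \<and> j \<in> {1..J}" if "(i,j)\<in>E" for i j using fin(2) that by auto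
  have inI: "i \<in> Iset E j" if "(i,j)\<in>E" for i j using that unfolding Iset_def by simp
  have inJ: "j \<in> Jset E i" if "(i,j)\<in>E" for i j using that unfolding Jset_def by simp
  have cardI: "card (Iset E j) \<le> I" for j
  proof -
    have "Iset E j \<subseteq> {1..I}" using fin(2) unfolding Iset_def by auto
    then show ?thesis using card_mono[of "{1..I}" "Iset E j"] by simp
  qed
  define m where "m = (\<lambda>j. Min (Iset E j))"
  have mI: "m j \<in> Iset E j" if "Iset E j \<noteq> {}" for j unfolding m_def using fin(4) that by simp
  define fl where "fl = (\<lambda>n i j. \<lfloor>s n * d i j\<rfloor>)"
  define R where "R = (\<lambda>n j. \<Sum>i\<in>Iset E j - {m j}. fl n i j)"
  define Ni where "Ni = (\<lambda>n i j. if i = m j then int (Nnij n i j) - R n j else int (Nnij n i j) + fl n i j)"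
  define Nt where "Nt = (\<lambda>n i j. nat (Ni n i j))"
  define G where "G = (\<Sum>x\<in>E. \<bar>d (fst x) (snd x)\<bar> + 1)"
  define C0 where "C0 = 1 + G"
  define K where "K = 2 + real I"
  define e where "e = (\<lambda>n i j. real_of_int (Ni n i j) - \<xi>s i j * real (Nn n j) - s n * d i j)"
  define \<epsilon> where "\<epsilon> = (\<lambda>n i. lamn n i - (\<Sum>j\<in>Jset E i. mun n i j * real (Nt n i j)) + vp * p i * s n)"
  have Ncl: "\<bar>real (Nnij n i j) - \<xi>s i j * real (Nn n j)\<bar> \<le> 1" if ij: "(i,j)\<in>E" for n i j
  proof -
    from Nij_lb[OF ij, of n] have "\<xi>s i j * real (Nn n j) < real (Nnij n i j) + 1" by (simp add: floor_le_iff)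
    moreover from Nij_ub[OF ij, of n] have "real (Nnij n i j) - 1 < \<xi>s i j * real (Nn n j)" by (simp add: le_ceiling_iff)
    ultimately show ?thesis by linarith
  qed
  have flb: "\<bar>real_of_int (fl n i j) - s n * d i j\<bar> \<le> 1" for n i j unfolding fl_def by linarith
  have Gnn: "G \<ge> 0" unfolding G_def by (intro sum_nonneg) auto
  have GI: "(\<Sum>i'\<in>Iset E j. \<bar>d i' j\<bar> + 1) \<le> G" for j
  proof -
    have "(\<Sum>i'\<in>Iset E j. \<bar>d i' j\<bar> + 1) = (\<Sum>x\<in>(\<lambda>i'. (i', j)) ` Iset E j. \<bar>d (fst x) (snd x)\<bar> + 1)"
      by (subst sum.reindex) (auto simp: inj_on_def)
    also have "\<dots> \<le> G" unfolding G_def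
      by (intro sum_mono2 fin(1)) (auto simp: Iset_def)
    finally show ?thesis .
  qed
  have colNi: "(\<Sum>i\<in>Iset E j. Ni n i j) = int (Nn n j)" if j: "j\<in>{1..J}" for n j
  proof -
    have NS: "(\<Sum>i\<in>Iset E j. int (Nnij n i j)) = int (Nn n j)"
      using Nij_sum[OF j, of n] by (metis of_nat_sum)
    show ?thesis
    proof (cases "Iset E j = {}")
      case True then show ?thesis using NS by simp
    next
      case False
      have mm: "m j \<in> Iset E j" using mI False .
      have "(\<Sum>i\<in>Iset E j. Ni n i j) = Ni n (m j) j + (\<Sum>i\<in>Iset E j - {m j}. Ni n i j)"
        using sum.remove[OF fin(4) mm] .
      also have "(\<Sum>i\<in>Iset E j - {m j}. Ni n i j) = (\<Sum>i\<in>Iset E j - {m j}. int (Nnij n i j) + fl n i j)"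
        by (intro sum.cong) (auto simp: Ni_def)
      also have "\<dots> = (\<Sum>i\<in>Iset E j - {m j}. int (Nnij n i j)) + R n j"
        by (simp add: sum.distrib R_def)
      also have "Ni n (m j) j = int (Nnij n (m j) j) - R n j" by (simp add: Ni_def)
      finally have "(\<Sum>i\<in>Iset E j. Ni n i j) = int (Nnij n (m j) j) + (\<Sum>i\<in>Iset E j - {m j}. int (Nnij n i j))"
        by simp
      also have "\<dots> = (\<Sum>i\<in>Iset E j. int (Nnij n i j))" using sum.remove[OF fin(4) mm, symmetric] .
      finally show ?thesis using NS by simp
    qed
  qed
  have ebound: "\<bar>e n i j\<bar> \<le> K" if ij: "(i,j)\<in>E" for n i j
  proof -
    have j: "j \<in> {1..J}" using Esub[OF ij] by simp
    have A1: "\<bar>real (Nnij n i j) - \<xi>s i j * real (Nn n j)\<bar> \<le> 1" by (rule Ncl[OF ij])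
    show ?thesis
    proof (cases "i = m j")
      case False
      have "e n i j = (real (Nnij n i j) - \<xi>s i j * real (Nn n j)) + (real_of_int (fl n i j) - s n * d i j)"
        unfolding e_def Ni_def using False by simp
      with A1 flb[of n i j] show ?thesis unfolding K_def by linarith
    next
      case True
      let ?A = "Iset E j - {m j}"
      have im: "i \<in> Iset E j" using inI[OF ij] .
      have dm: "d i j = - (\<Sum>i'\<in>?A. d i' j)" using dcol[OF j] sum.remove[OF fin(4) im, of "\<lambda>i. d i j"] True by simp
      have "e n i j = (real (Nnij n i j) - \<xi>s i j * real (Nn n j)) + (\<Sum>i'\<in>?A. s n * d i' j - real_of_int (fl n i' j))"
        unfolding e_def Ni_def R_def using True dm by (simp add: sum_subtractf sum_distrib_left)
      moreover have "\<bar>\<Sum>i'\<in>?A. s n * d i' j - real_of_int (fl n i' j)\<bar> \<le> real I"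
      proof -
        have "\<bar>\<Sum>i'\<in>?A. s n * d i' j - real_of_int (fl n i' j)\<bar> \<le> (\<Sum>i'\<in>?A. \<bar>s n * d i' j - real_of_int (fl n i' j)\<bar>)"
          by (rule sum_abs)
        also have "\<dots> \<le> (\<Sum>i'\<in>?A. 1)" using flb by (intro sum_mono) (simp add: abs_minus_commute)
        also have "\<dots> = real (card ?A)" by simp
        also have "card ?A \<le> card (Iset E j)" using fin(4) by (intro card_mono) auto
        then have "real (card ?A) \<le> real I" using cardI[of j] by linarith
        finally show ?thesis .
      qed
      ultimately show ?thesis using A1 unfolding K_def by linarith
    qed
  qed
  have s1: "s n \<ge> 1" if "n \<ge> 1" for n unfolding s_def using that by simp
  have Ni_close: "\<bar>real_of_int (Ni n i j) - real (Nnij n i j)\<bar> \<le> C0 * s n" if ij: "(i,j)\<in>E" and n: "n \<ge> 1" for n i j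
  proof -
    have flabs: "\<bar>real_of_int (fl n i' j')\<bar> \<le> s n * (\<bar>d i' j'\<bar> + 1)" for i' j'
    proof -
      have "\<bar>real_of_int (fl n i' j')\<bar> \<le> \<bar>s n * d i' j'\<bar> + 1" using flb[of n i' j'] by linarith
      also have "\<bar>s n * d i' j'\<bar> = s n * \<bar>d i' j'\<bar>" using s1[OF n] by (simp add: abs_mult)
      finally show ?thesis using s1[OF n] by (simp add: algebra_simps)
    qed
    have "\<bar>real_of_int (Ni n i j) - real (Nnij n i j)\<bar> \<le> s n * (\<Sum>i'\<in>Iset E j. \<bar>d i' j\<bar> + 1)"
    proof (cases "i = m j")
      case False
      have "\<bar>real_of_int (Ni n i j) - real (Nnij n i j)\<bar> = \<bar>real_of_int (fl n i j)\<bar>" unfolding Ni_def using False by simp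
      also have "\<dots> \<le> s n * (\<bar>d i j\<bar> + 1)" by (rule flabs)
      also have "\<bar>d i j\<bar> + 1 \<le> (\<Sum>i'\<in>Iset E j. \<bar>d i' j\<bar> + 1)"
        by (rule member_le_sum[OF inI[OF ij] _ fin(4)]) simp
      then have "s n * (\<bar>d i j\<bar> + 1) \<le> s n * (\<Sum>i'\<in>Iset E j. \<bar>d i' j\<bar> + 1)" using s1[OF n] by simp
      finally show ?thesis .
    next
      case True
      have "\<bar>real_of_int (Ni n i j) - real (Nnij n i j)\<bar> = \<bar>\<Sum>i'\<in>Iset E j - {m j}. real_of_int (fl n i' j)\<bar>"
        unfolding Ni_def R_def using True by simp
      also have "\<dots> \<le> (\<Sum>i'\<in>Iset E j - {m j}. \<bar>real_of_int (fl n i' j)\<bar>)" by (rule sum_abs)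
      also have "\<dots> \<le> (\<Sum>i'\<in>Iset E j - {m j}. s n * (\<bar>d i' j\<bar> + 1))" by (intro sum_mono flabs)
      also have "\<dots> = s n * (\<Sum>i'\<in>Iset E j - {m j}. \<bar>d i' j\<bar> + 1)" by (simp add: sum_distrib_left)
      also have "(\<Sum>i'\<in>Iset E j - {m j}. \<bar>d i' j\<bar> + 1) \<le> (\<Sum>i'\<in>Iset E j. \<bar>d i' j\<bar> + 1)"
        by (intro sum_mono2 fin(4)) auto
      then have "s n * (\<Sum>i'\<in>Iset E j - {m j}. \<bar>d i' j\<bar> + 1) \<le> s n * (\<Sum>i'\<in>Iset E j. \<bar>d i' j\<bar> + 1)" using s1[OF n] by simp
      finally show ?thesis .
    qed
    also have "\<dots> \<le> s n * C0" using GI[of j] s1[OF n] unfolding C0_def by (intro mult_left_mono) auto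
    finally show ?thesis by (simp add: mult.commute)
  qed
  have ev_pos: "\<forall>\<^sub>F n in sequentially. Ni n i j \<ge> 0" if ij: "(i,j)\<in>E" for i j
  proof -
    have j: "j \<in> {1..J}" using Esub[OF ij] by simp
    have xpos: "\<xi>s i j * nu j > 0" using crp_pos[OF ij] nu_pos[OF j] by simp
    have "(\<lambda>n. \<xi>s i j * (real (Nn n j) / real n) - 1 / real n - C0 * (1 / s n)) \<longlonglongrightarrow> \<xi>s i j * nu j - 0 - C0 * 0"
      unfolding s_def by (intro tendsto_intros lim_N[OF j] lim_const_over_n inv_sqrt_lim)
    then have "\<forall>\<^sub>F n in sequentially. 0 < \<xi>s i j * (real (Nn n j) / real n) - 1 / real n - C0 * (1 / s n)"
      using xpos by (intro order_tendstoD(1)) auto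
    then show ?thesis using eventually_ge_at_top[of 1]
    proof eventually_elim
      case (elim n)
      have sp: "s n > 0" using elim(2) unfolding s_def by simp
      have ss: "real n = s n * s n" unfolding s_def by simp
      have "0 < s n * s n * (\<xi>s i j * (real (Nn n j) / real n) - 1 / real n - C0 * (1 / s n))"
        using elim(1) sp by simp
      also have "s n * s n * (\<xi>s i j * (real (Nn n j) / real n) - 1 / real n - C0 * (1 / s n))
          = \<xi>s i j * real (Nn n j) - 1 - C0 * s n" unfolding ss using sp by (simp add: field_simps)
      finally have "0 < \<xi>s i j * real (Nn n j) - 1 - C0 * s n" .
      with Ni_close[OF ij elim(2)] Ncl[OF ij, of n] have "0 < real_of_int (Ni n i j)" by linarith
      then show ?case by simp
    qed
  qed
  have evall: "\<forall>\<^sub>F n in sequentially. n \<ge> 1 \<and> (\<forall>x\<in>E. Ni n (fst x) (snd x) \<ge> 0)"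
    using eventually_ge_at_top[of 1] eventually_ball_finite[OF fin(1), of "\<lambda>n x. Ni n (fst x) (snd x) \<ge> 0"] ev_pos
    by (auto intro: eventually_conj)
  have C0pos: "C0 > 0" unfolding C0_def using Gnn by simp
  have Nteq: "real (Nt n i j) = real_of_int (Ni n i j)" if "Ni n i j \<ge> 0" for n i j
    unfolding Nt_def using that by simp
  have epslim: "(\<lambda>n. \<epsilon> n i / sqrt (real n)) \<longlonglongrightarrow> 0" if i: "i \<in> {1..I}" for i
  proof -
    have lamsum: "(\<Sum>j\<in>Jset E i. mu i j * nu j * \<xi>s i j) = lam i"
      using crp i unfolding crp_unique_solution_def crp_feasible_def by blast
    have edge: "(\<lambda>n. mun n i j * real (Nt n i j) / sqrt (real n) - sqrt (real n) * (mu i j * \<xi>s i j * nu j))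
        \<longlonglongrightarrow> mu i j * \<xi>s i j * nuhat j + mu i j * d i j + muhat i j * \<xi>s i j * nu j" if jj: "j \<in> Jset E i" for j
    proof -
      have ij: "(i,j) \<in> E" using jj unfolding Jset_def by simp
      have j: "j \<in> {1..J}" using Esub[OF ij] by simp
      show ?thesis
      proof (rule edge_lim[where e = "\<lambda>n. e n i j" and K = K])
        show "(\<lambda>n. sqrt (real n) * (mun n i j - mu i j)) \<longlonglongrightarrow> muhat i j" by (rule lim_muhat[OF ij])
        show "(\<lambda>n. sqrt (real n) * (real (Nn n j) / real n - nu j)) \<longlonglongrightarrow> nuhat j" by (rule lim_nuhat[OF j])
        show "\<bar>e n i j\<bar> \<le> K" for n by (rule ebound[OF ij])
        show "\<forall>\<^sub>F n in sequentially. real (Nt n i j) = \<xi>s i j * real (Nn n j) + sqrt (real n) * d i j + e n i j"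
          using ev_pos[OF ij] by eventually_elim (simp add: Nteq e_def s_def)
      qed
    qed
    define T where "T = (\<lambda>n. (lamn n i - real n * lam i) / sqrt (real n)
       - (\<Sum>j\<in>Jset E i. mun n i j * real (Nt n i j) / sqrt (real n) - sqrt (real n) * (mu i j * \<xi>s i j * nu j)) + vp * p i)"
    have "T \<longlonglongrightarrow> lamhat i - (\<Sum>j\<in>Jset E i. mu i j * \<xi>s i j * nuhat j + mu i j * d i j + muhat i j * \<xi>s i j * nu j) + vp * p i"
      unfolding T_def by (intro tendsto_intros lim_lamhat[OF i] tendsto_sum edge)
    moreover have "(\<Sum>j\<in>Jset E i. mu i j * \<xi>s i j * nuhat j + mu i j * d i j + muhat i j * \<xi>s i j * nu j)
        = (\<Sum>j\<in>Jset E i. mu i j * \<kappa> i j)"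
    proof (intro sum.cong refl)
      fix j assume "j \<in> Jset E i"
      then have "mu i j > 0" using mu_pos unfolding Jset_def by simp
      then show "mu i j * \<xi>s i j * nuhat j + mu i j * d i j + muhat i j * \<xi>s i j * nu j = mu i j * \<kappa> i j"
        unfolding d_def by (simp add: field_simps)
    qed
    ultimately have TL: "T \<longlonglongrightarrow> 0" using tight[OF i] by simp
    have "\<forall>\<^sub>F n in sequentially. T n = \<epsilon> n i / sqrt (real n)"
      using eventually_ge_at_top[of 1]
    proof eventually_elim
      case (elim n)
      have sp: "sqrt (real n) > 0" using elim by simp
      have sq: "sqrt (real n) * sqrt (real n) = real n" by simp
      have "real n * lam i = (sqrt (real n) * lam i) * sqrt (real n)" by (metis sq mult.commute mult.assoc)
      then have "real n * lam i / sqrt (real n) = sqrt (real n) * lam i"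
        using sp by (metis nonzero_mult_div_cancel_right less_irrefl)
      then have "T n = lamn n i / sqrt (real n) - sqrt (real n) * lam i
          - ((\<Sum>j\<in>Jset E i. mun n i j * real (Nt n i j)) / sqrt (real n) - sqrt (real n) * (\<Sum>j\<in>Jset E i. mu i j * \<xi>s i j * nu j)) + vp * p i"
        unfolding T_def by (simp add: sum_subtractf sum_divide_distrib sum_distrib_left diff_divide_distrib)
      also have "(\<Sum>j\<in>Jset E i. mu i j * \<xi>s i j * nu j) = lam i" using lamsum by (simp add: mult_ac)
      finally show ?case unfolding \<epsilon>_def s_def using sp by (simp add: field_simps)
    qed
    then show ?thesis by (rule Lim_transform_eventually[OF TL])
  qed
  show ?thesis
  proof (intro exI[of _ Nt] exI[of _ C0] conjI C0pos exI[of _ \<epsilon>] ballI epslim)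
    show "\<forall>\<^sub>F n in sequentially.
       (\<forall>i \<in> {1..I}. lamn n i =
          (\<Sum>j \<in> Jset E i. mun n i j * real (Nt n i j)) - vp * p i * sqrt (real n) + \<epsilon> n i) \<and>
       (\<forall>(i, j) \<in> E. \<bar>real (Nnij n i j) - real (Nt n i j)\<bar> \<le> C0 * sqrt (real n)) \<and>
       (\<forall>j \<in> {1..J}. (\<Sum>i \<in> Iset E j. Nt n i j) = Nn n j)"
      using evall
    proof eventually_elim
      case (elim n)
      have pos: "Ni n i j \<ge> 0" if "(i,j)\<in>E" for i j using elim that by fastforce
      have A: "\<forall>i \<in> {1..I}. lamn n i = (\<Sum>j \<in> Jset E i. mun n i j * real (Nt n i j)) - vp * p i * sqrt (real n) + \<epsilon> n i"
        unfolding \<epsilon>_def s_def by simp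
      have B: "\<forall>(i, j) \<in> E. \<bar>real (Nnij n i j) - real (Nt n i j)\<bar> \<le> C0 * sqrt (real n)"
      proof (clarify)
        fix i j assume ij: "(i,j)\<in>E"
        show "\<bar>real (Nnij n i j) - real (Nt n i j)\<bar> \<le> C0 * sqrt (real n)"
          using Ni_close[OF ij] elim Nteq[OF pos[OF ij]] unfolding s_def by (simp add: abs_minus_commute)
      qed
      have Cc: "\<forall>j \<in> {1..J}. (\<Sum>i \<in> Iset E j. Nt n i j) = Nn n j"
      proof
        fix j assume j: "j \<in> {1..J}"
        have "int (\<Sum>i \<in> Iset E j. Nt n i j) = (\<Sum>i \<in> Iset E j. int (Nt n i j))" by simp
        also have "\<dots> = (\<Sum>i \<in> Iset E j. Ni n i j)"
          by (intro sum.cong refl) (auto simp: Nt_def Iset_def intro!: pos)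
        also have "\<dots> = int (Nn n j)" by (rule colNi[OF j])
        finally show "(\<Sum>i \<in> Iset E j. Nt n i j) = Nn n j" by (simp only: of_nat_eq_iff)
      qed
      show ?case using A B Cc by blast
    qed
  qed
qed

end
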